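(* Consider an RBM with observed variables $X\in\{-1,1\}^n$ as in the context, with parameter $s$. Fix an observed variable $u$ and subsets $I,S\subseteq[n]$ such that $\{u\},I,S$ are pairwise disjoint, $I$ is nonempty, and $I$ is a subset of the MRF neighborhood of $u$. Then there exists a subset $I'\subseteq I$ with $|I'|\le 2^s$ such that \[\nu_{u,I'|S}\ge\frac{1}{(4|I|)^{2^s}}\left(\frac{1}{|I|}\right)^{2^s(2^s+1)}\nu_{u,I|S}.\]
   Context: RBM: $\mathbb{P}(X=x,Y=y)\propto\exp(x^TJy+h^Tx+g^Ty)$ over observed $X\in\{-1,1\}^n$, latent $Y\in\{-1,1\}^m$. The marginal of $X$ is $\propto\exp(f(x))$, $f(x)=\sum_j\rho(J_j\cdot x+g_j)+h^Tx$, $\rho(t)=\log(e^t+e^{-t})$, $J_j$ the $j$-th column of $J$; $f=\sum_{T\subseteq[n]}\hat f(T)\chi_T$, $\chi_T(x)=\prod_{i\in T}x_i$. MRF neighborhood of $u$: all $i\ne u$ with $\hat f(T)\ne0$ for some $T\ni u,i$. $s$: maximum over $u$ of the number of latent $j$ with $J_{i,j}\ne0$ for some $i$ in the MRF neighborhood of $u$. For disjoint $\{u\},I,S$: $\nu_{u,I|S}:=\mathbb{E}_{R,G}\big[\mathbb{E}_{X_S}|\mathbb{P}(X_u=R,X_I=G|X_S)-\mathbb{P}(X_u=R|X_S)\mathbb{P}(X_I=G|X_S)|\big]$, with $R$ uniform on $\{-1,1\}$, $G$ uniform on $\{-1,1\}^{|I|}$, independent, and $X_S$ and all probabilities under the marginal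 of the RBM. *)

theory Defs
  imports Complex_Main "HOL-Library.FuncSet"
begin

text \<open>Observed variables are indexed by 0..<n, latent ones by 0..<m.
  A configuration of the observed variables is an extensional function
  on {0..<n} with values in {-1,1}.\<close>

definition rho :: "real \<Rightarrow> real" where
  "rho t = ln (exp t + exp (- t))"

definition cube :: "nat set \<Rightarrow> (nat \<Rightarrow> real) set" where
  "cube A = A \<rightarrow>\<^sub>E {-1, 1}"

text \<open>The function f with marginal of X proportional to exp f.\<close>
definition rbm_f :: "nat \<Rightarrow> nat \<Rightarrow> (nat \<Rightarrow> nat \<Rightarrow> real) \<Rightarrow> (nat \<Rightarrow> real) \<Rightarrow> (nat \<Rightarrow> real)
    \<Rightarrow> (nat \<Rightarrow> real) \<Rightarrow> real" where
  "rbm_f n m J h g x = (\<Sum>j<m. rho ((\<Sum>i<n. J i j * x i) + g j)) + (\<Sum>i<n. h i * x i)"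

definition chi :: "nat set \<Rightarrow> (nat \<Rightarrow> real) \<Rightarrow> real" where
  "chi T x = (\<Prod>i\<in>T. x i)"

definition fourier_coeff :: "nat \<Rightarrow> ((nat \<Rightarrow> real) \<Rightarrow> real) \<Rightarrow> nat set \<Rightarrow> real" where
  "fourier_coeff n f T = (\<Sum>x\<in>cube {0..<n}. f x * chi T x) / 2 ^ n"

definition mrf_nbhd :: "nat \<Rightarrow> nat \<Rightarrow> (nat \<Rightarrow> nat \<Rightarrow> real) \<Rightarrow> (nat \<Rightarrow> real) \<Rightarrow> (nat \<Rightarrow> real)
    \<Rightarrow> nat \<Rightarrow> nat set" where
  "mrf_nbhd n m J h g u = {i \<in> {0..<n}. i \<noteq> u \<and>
     (\<exists>T \<subseteq> {0..<n}. u \<in> T \<and> i \<in> T \<and> fourier_coeff n (rbm_f n m J h g) T \<noteq> 0)}"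

definition rbm_s :: "nat \<Rightarrow> nat \<Rightarrow> (nat \<Rightarrow> nat \<Rightarrow> real) \<Rightarrow> (nat \<Rightarrow> real) \<Rightarrow> (nat \<Rightarrow> real) \<Rightarrow> nat" where
  "rbm_s n m J h g = Max ((\<lambda>u. card {j \<in> {0..<m}. \<exists>i \<in> mrf_nbhd n m J h g u. J i j \<noteq> 0}) ` {0..<n})"

definition rbm_prob :: "nat \<Rightarrow> nat \<Rightarrow> (nat \<Rightarrow> nat \<Rightarrow> real) \<Rightarrow> (nat \<Rightarrow> real) \<Rightarrow> (nat \<Rightarrow> real)
    \<Rightarrow> ((nat \<Rightarrow> real) \<Rightarrow> bool) \<Rightarrow> real" where
  "rbm_prob n m J h g E =
     (\<Sum>x\<in>{x \<in> cube {0..<n}. E x}. exp (rbm_f n m J h g x)) /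
     (\<Sum>x\<in>cube {0..<n}. exp (rbm_f n m J h g x))"

definition agree :: "nat set \<Rightarrow> (nat \<Rightarrow> real) \<Rightarrow> (nat \<Rightarrow> real) \<Rightarrow> bool" where
  "agree A a x \<longleftrightarrow> (\<forall>i\<in>A. x i = a i)"

definition rbm_cond :: "nat \<Rightarrow> nat \<Rightarrow> (nat \<Rightarrow> nat \<Rightarrow> real) \<Rightarrow> (nat \<Rightarrow> real) \<Rightarrow> (nat \<Rightarrow> real)
    \<Rightarrow> ((nat \<Rightarrow> real) \<Rightarrow> bool) \<Rightarrow> nat set \<Rightarrow> (nat \<Rightarrow> real) \<Rightarrow> real" where
  "rbm_cond n m J h g E S xs =
     rbm_prob n m J h g (\<lambda>x. E x \<and> agree S xs x) / rbm_prob n m J h g (agree S xs)"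

text \<open>nu_{u,I|S}: R uniform on {-1,1}, G uniform on {-1,1}^I, X_S from the marginal.\<close>
definition rbm_nu :: "nat \<Rightarrow> nat \<Rightarrow> (nat \<Rightarrow> nat \<Rightarrow> real) \<Rightarrow> (nat \<Rightarrow> real) \<Rightarrow> (nat \<Rightarrow> real)
    \<Rightarrow> nat \<Rightarrow> nat set \<Rightarrow> nat set \<Rightarrow> real" where
  "rbm_nu n m J h g u I S =
     (\<Sum>r\<in>{-1, 1::real}. \<Sum>G\<in>cube I. \<Sum>xs\<in>cube S.
        (1 / 2) * (1 / 2 ^ card I) * rbm_prob n m J h g (agree S xs) *
        \<bar>rbm_cond n m J h g (\<lambda>x. x u = r \<and> agree I G x) S xs
          - rbm_cond n m J h g (\<lambda>x. x u = r) S xs * rbm_cond n m J h g (agree I G) S xs\<bar>)"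

end

theory Submission
  imports Defs
begin

definition Mc :: "'y set \<Rightarrow> ('y \<Rightarrow> real) \<Rightarrow> ('y \<Rightarrow> nat \<Rightarrow> real) \<Rightarrow> nat set \<Rightarrow> real" where
  "Mc Y c mu T = (\<Sum>y\<in>Y. c y * (\<Prod>i\<in>T. mu y i))"

lemma Mc_insert_split:
  assumes "finite Y" "y0 \<in> Y" "a \<notin> T" "finite T"
  shows "Mc Y c mu (insert a T) = Mc (Y - {y0}) (\<lambda>y. c y * (mu y a - mu y0 a)) mu T + mu y0 a * Mc Y c mu T"
proof -
  have "Mc Y c mu (insert a T) = (\<Sum>y\<in>Y. c y * (mu y a - mu y0 a) * (\<Prod>i\<in>T. mu y i)) + mu y0 a * Mc Y c mu T"
    unfolding Mc_def using assms
    by (simp add: sum_distrib_left sum.distrib[symmetric] algebra_simps)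
  also have "(\<Sum>y\<in>Y. c y * (mu y a - mu y0 a) * (\<Prod>i\<in>T. mu y i)) =
      (\<Sum>y\<in>Y - {y0}. c y * (mu y a - mu y0 a) * (\<Prod>i\<in>T. mu y i))"
    using assms by (intro sum.mono_neutral_right) auto
  finally show ?thesis unfolding Mc_def by simp
qed

lemma fin_fam: "finite I \<Longrightarrow> finite {T. T \<subseteq> I \<and> P T}"
  by (rule finite_subset[of _ "Pow I"]) auto

lemma Mc_empty_Y: "Mc {} c mu T = 0" by (simp add: Mc_def)

lemma sum_split_insert_family:
  fixes F :: "nat set \<Rightarrow> real"
  assumes "finite I" "a \<in> I" "\<And>T. F T \<ge> 0"
  shows "(\<Sum>T\<in>{T. T \<subseteq> I - {a} \<and> card T \<le> k}. F (insert a T) + F T)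
     \<le> (\<Sum>T\<in>{T. T \<subseteq> I \<and> card T \<le> Suc k}. F T)"
proof -
  let ?F' = "{T. T \<subseteq> I - {a} \<and> card T \<le> k}"
  let ?F = "{T. T \<subseteq> I \<and> card T \<le> Suc k}"
  have finF: "finite ?F" using assms(1) by (rule fin_fam)
  have finF': "finite ?F'" using assms(1) by (intro fin_fam) simp
  have inj: "inj_on (insert a) ?F'" unfolding inj_on_def by blast
  have sub1: "insert a ` ?F' \<subseteq> ?F"
  proof
    fix X assume "X \<in> insert a ` ?F'"
    then obtain T where T: "T \<subseteq> I - {a}" "card T \<le> k" "X = insert a T" by auto
    have "finite T" using T(1) assms(1) finite_subset by blast
    then have "card X \<le> Suc k" using T by (simp add: card_insert_if)
    then show "X \<in> ?F" using T assms(2) by auto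
  qed
  have sub2: "?F' \<subseteq> ?F" by auto
  have disj: "insert a ` ?F' \<inter> ?F' = {}" by auto
  have "(\<Sum>T\<in>?F'. F (insert a T) + F T) = (\<Sum>T\<in>insert a ` ?F'. F T) + (\<Sum>T\<in>?F'. F T)"
    by (simp add: sum.distrib sum.reindex[OF inj])
  also have "\<dots> = (\<Sum>T\<in>insert a ` ?F' \<union> ?F'. F T)"
    using disj finF' by (simp add: sum.union_disjoint)
  also have "\<dots> \<le> (\<Sum>T\<in>?F. F T)"
    using sub1 sub2 finF assms(3) by (intro sum_mono2) auto
  finally show ?thesis .
qed

lemma core:
  fixes k :: nat and mu :: "'y \<Rightarrow> nat \<Rightarrow> real"
  shows "finite Y \<Longrightarrow> card Y \<le> k \<Longrightarrow> finite I \<Longrightarrow> card I \<le> N0 \<Longrightarrow>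
    (\<forall>y\<in>Y. \<forall>i\<in>I. \<bar>mu y i\<bar> \<le> 1) \<Longrightarrow> T \<subseteq> I \<Longrightarrow>
    \<bar>Mc Y c mu T\<bar> \<le> (real N0 + 1)^k * (\<Sum>T'\<in>{T'. T' \<subseteq> I \<and> card T' \<le> k}. \<bar>Mc Y c mu T'\<bar>)"
proof (induction k arbitrary: Y I c T)
  case 0
  then have "Y = {}" by simp
  then show ?case by (simp add: Mc_empty_Y)
next
  case (Suc k)
  show ?case
  proof (cases "Y = {}")
    case True
    then show ?thesis by (simp add: Mc_empty_Y)
  next
    case False
    then obtain y0 where y0: "y0 \<in> Y" by blast
    define L where "L = (\<Sum>T'\<in>{T'. T' \<subseteq> I \<and> card T' \<le> Suc k}. \<bar>Mc Y c mu T'\<bar>)"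
    have finF: "finite {T'. T' \<subseteq> I \<and> card T' \<le> Suc k}"
      using Suc.prems(3) by (rule fin_fam)
    have L0: "L \<ge> 0" unfolding L_def by (intro sum_nonneg) auto
    have Lempty: "\<bar>Mc Y c mu {}\<bar> \<le> L" unfolding L_def
      using finF by (intro member_le_sum) auto
    have step: "\<bar>Mc Y c mu T\<bar> \<le> \<bar>Mc Y c mu {}\<bar> + real (card T) * ((real N0 + 1)^k * L)"
      if "T \<subseteq> I" for T
    proof -
      have "finite T" using that Suc.prems(3) finite_subset by blast
      then show ?thesis using that
      proof (induction T rule: finite_induct)
        case empty
        then show ?case by simp
      next
        case (insert a T0)
        let ?c' = "\<lambda>y. c y * (mu y a - mu y0 a)"
        have aI: "a \<in> I" using insert by auto
        have IH: "\<bar>Mc (Y - {y0}) ?c' mu T0\<bar> \<le> (real N0 + 1)^k *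
           (\<Sum>T'\<in>{T'. T' \<subseteq> I - {a} \<and> card T' \<le> k}. \<bar>Mc (Y - {y0}) ?c' mu T'\<bar>)"
        proof (rule Suc.IH)
          show "finite (Y - {y0})" using Suc.prems by auto
          show "card (Y - {y0}) \<le> k" using Suc.prems y0 by auto
          show "finite (I - {a})" using Suc.prems by auto
          show "card (I - {a}) \<le> N0" using Suc.prems aI
            by (meson card_Diff1_le le_trans)
          show "\<forall>y\<in>Y - {y0}. \<forall>i\<in>I - {a}. \<bar>mu y i\<bar> \<le> 1" using Suc.prems by auto
          show "T0 \<subseteq> I - {a}" using insert by auto
        qed
        have "(\<Sum>T'\<in>{T'. T' \<subseteq> I - {a} \<and> card T' \<le> k}. \<bar>Mc (Y - {y0}) ?c' mu T'\<bar>)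
            \<le> (\<Sum>T'\<in>{T'. T' \<subseteq> I - {a} \<and> card T' \<le> k}. \<bar>Mc Y c mu (insert a T')\<bar> + \<bar>Mc Y c mu T'\<bar>)"
        proof (rule sum_mono)
          fix T' assume "T' \<in> {T'. T' \<subseteq> I - {a} \<and> card T' \<le> k}"
          then have "a \<notin> T'" by auto
          then have e: "Mc (Y - {y0}) ?c' mu T' = Mc Y c mu (insert a T') - mu y0 a * Mc Y c mu T'"
            proof -
            have "finite T'" using Suc.prems(3) \<open>T' \<in> _\<close> finite_subset[of T' I] by auto
            then show ?thesis using Mc_insert_split[OF Suc.prems(1) y0 \<open>a \<notin> T'\<close>, of c mu] by simp
          qed
          have "\<bar>mu y0 a\<bar> \<le> 1" using Suc.prems y0 aI by auto
          then have "\<bar>mu y0 a * Mc Y c mu T'\<bar> \<le> \<bar>Mc Y c mu T'\<bar>"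
            by (simp add: abs_mult mult_left_le_one_le)
          then show "\<bar>Mc (Y - {y0}) ?c' mu T'\<bar> \<le> \<bar>Mc Y c mu (insert a T')\<bar> + \<bar>Mc Y c mu T'\<bar>"
            unfolding e by linarith
        qed
        also have "\<dots> \<le> L" unfolding L_def
          by (rule sum_split_insert_family[OF Suc.prems(3) aI]) simp
        finally have IH2: "\<bar>Mc (Y - {y0}) ?c' mu T0\<bar> \<le> (real N0 + 1)^k * L"
          using IH by (meson order_trans mult_left_mono zero_le_power add_nonneg_nonneg of_nat_0_le_iff zero_le_one)
        have e2: "Mc Y c mu (insert a T0) = Mc (Y - {y0}) ?c' mu T0 + mu y0 a * Mc Y c mu T0"
          using Mc_insert_split[OF Suc.prems(1) y0 insert(2,1)] .
        have "\<bar>mu y0 a\<bar> \<le> 1" using Suc.prems y0 aI by auto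
        then have "\<bar>mu y0 a * Mc Y c mu T0\<bar> \<le> \<bar>Mc Y c mu T0\<bar>"
          by (simp add: abs_mult mult_left_le_one_le)
        moreover have "\<bar>Mc Y c mu T0\<bar> \<le> \<bar>Mc Y c mu {}\<bar> + real (card T0) * ((real N0 + 1)^k * L)"
          using insert by auto
        ultimately show ?case using IH2 insert(1,2) unfolding e2 by (simp add: algebra_simps)
      qed
    qed
    have cT: "real (card T) \<le> real N0"
      using card_mono[OF Suc.prems(3,6)] Suc.prems(4) by simp
    have "\<bar>Mc Y c mu T\<bar> \<le> L + real N0 * ((real N0 + 1)^k * L)"
      using step[OF Suc.prems(6)] Lempty cT L0
      by (smt (verit) mult_right_mono zero_le_power mult_nonneg_nonneg of_nat_0_le_iff)
    also have "\<dots> \<le> (real N0 + 1)^Suc k * L"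
    proof -
      have "1 \<le> (real N0 + 1)^k" by simp
      then have "L \<le> (real N0 + 1)^k * L" using L0 by (simp add: mult_le_cancel_right1)
      then show ?thesis by (simp add: algebra_simps)
    qed
    finally show ?thesis unfolding L_def .
  qed
qed

lemma cube_PiE: "cube T = PiE T (\<lambda>_. {-1, 1})" by (simp add: cube_def)

lemma finite_cube: "finite T \<Longrightarrow> finite (cube T)"
  by (simp add: cube_def finite_PiE)

lemma card_cube: "finite T \<Longrightarrow> card (cube T) = 2 ^ card T"
  by (simp add: cube_def card_PiE numeral_2_eq_2)

lemma cube_vals: "G \<in> cube T \<Longrightarrow> i \<in> T \<Longrightarrow> G i = -1 \<or> G i = 1"
  by (auto simp: cube_def PiE_def)

lemma abs_chi: "G \<in> cube T \<Longrightarrow> finite T \<Longrightarrow> \<bar>chi T G\<bar> = 1"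
  unfolding chi_def abs_prod
  by (rule prod.neutral) (auto dest: cube_vals)

definition avgq :: "(nat set \<Rightarrow> (nat \<Rightarrow> real) \<Rightarrow> real) \<Rightarrow> nat set \<Rightarrow> real" where
  "avgq q T = (1 / 2 ^ card T) * (\<Sum>G\<in>cube T. \<bar>q T G\<bar>)"

lemma avgq_nonneg: "avgq q T \<ge> 0"
  unfolding avgq_def by (intro mult_nonneg_nonneg sum_nonneg) auto

lemma sum_pm: "(\<Sum>v\<in>{-1, 1::real}. (1 + v * x) / 2 * v) = x"
  by (simp add: field_simps)

lemma Mc_eq:
  assumes "finite T"
    and rep: "\<forall>G\<in>cube T. q T G = (\<Sum>y\<in>Y. c y * (\<Prod>i\<in>T. (1 + G i * mu y i) / 2))"
  shows "Mc Y c mu T = (\<Sum>G\<in>cube T. q T G * chi T G)"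
proof -
  have "(\<Sum>G\<in>cube T. q T G * chi T G) =
      (\<Sum>G\<in>cube T. \<Sum>y\<in>Y. c y * (\<Prod>i\<in>T. (1 + G i * mu y i) / 2 * G i))"
    using rep by (intro sum.cong) (auto simp: chi_def sum_distrib_right prod.distrib[symmetric] mult.assoc intro!: sum.cong prod.cong)
  also have "\<dots> = (\<Sum>y\<in>Y. c y * (\<Sum>G\<in>cube T. \<Prod>i\<in>T. (1 + G i * mu y i) / 2 * G i))"
    by (subst sum.swap) (simp add: sum_distrib_left)
  also have "\<dots> = (\<Sum>y\<in>Y. c y * (\<Prod>i\<in>T. \<Sum>v\<in>{-1,1::real}. (1 + v * mu y i) / 2 * v))"
    unfolding cube_PiE
    by (intro sum.cong refl arg_cong2[where f="(*)"] prod_sum_PiE[symmetric]) (use assms(1) in auto)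
  also have "\<dots> = Mc Y c mu T" unfolding Mc_def
    by (intro sum.cong refl arg_cong2[where f="(*)"] prod.cong) (simp_all add: field_simps)
  finally show ?thesis by simp
qed

lemma Mc_le:
  assumes "finite T"
    and rep: "\<forall>G\<in>cube T. q T G = (\<Sum>y\<in>Y. c y * (\<Prod>i\<in>T. (1 + G i * mu y i) / 2))"
  shows "\<bar>Mc Y c mu T\<bar> \<le> 2 ^ card T * avgq q T"
proof -
  have "\<bar>Mc Y c mu T\<bar> \<le> (\<Sum>G\<in>cube T. \<bar>q T G * chi T G\<bar>)"
    unfolding Mc_eq[where q=q and Y=Y and c=c and mu=mu and T=T, OF assms(1) rep] by (rule sum_abs)
  also have "\<dots> = (\<Sum>G\<in>cube T. \<bar>q T G\<bar>)"
    using assms(1) by (intro sum.cong) (auto simp: abs_mult abs_chi)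
  also have "\<dots> = 2 ^ card T * avgq q T" unfolding avgq_def by simp
  finally show ?thesis .
qed

lemma q_expand:
  assumes "finite I" "G \<in> cube I"
    and rep: "q I G = (\<Sum>y\<in>Y. c y * (\<Prod>i\<in>I. (1 + G i * mu y i) / 2))"
  shows "q I G = (1 / 2 ^ card I) * (\<Sum>X\<in>Pow I. Mc Y c mu X * chi X G)"
proof -
  have e: "(\<Prod>i\<in>I. (1 + G i * mu y i) / 2) = (1 / 2 ^ card I) * (\<Sum>X\<in>Pow I. (\<Prod>i\<in>X. mu y i) * chi X G)" for y
  proof -
    have "(\<Prod>i\<in>I. (1 + G i * mu y i) / 2) = (\<Prod>i\<in>I. (1/2) * (G i * mu y i + 1))"
      by (intro prod.cong) (simp_all add: field_simps)
    also have "\<dots> = (\<Prod>i\<in>I. 1/2) * (\<Prod>i\<in>I. G i * mu y i + 1)"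
      by (rule prod.distrib)
    also have "(\<Prod>i\<in>I. (1/2::real)) = (1/2) ^ card I" by simp
    also have "(\<Prod>i\<in>I. G i * mu y i + 1) = (\<Sum>X\<in>Pow I. (\<Prod>i\<in>X. G i * mu y i) * (\<Prod>i\<in>I-X. 1))"
      by (rule prod_add[OF assms(1)])
    also have "\<dots> = (\<Sum>X\<in>Pow I. (\<Prod>i\<in>X. mu y i) * chi X G)"
      by (simp add: chi_def prod.distrib mult.commute)
    finally show ?thesis by (simp add: power_one_over)
  qed
  show ?thesis unfolding rep e Mc_def
    by (simp add: sum_distrib_left sum_distrib_right mult.assoc mult.left_commute sum.swap[of _ Y])
qed

lemma abs_chi': "(\<forall>i\<in>X. G i = -1 \<or> G i = 1) \<Longrightarrow> \<bar>chi X G\<bar> = 1"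
  unfolding chi_def abs_prod by (rule prod.neutral) auto

lemma qlevel:
  fixes mu :: "'y \<Rightarrow> nat \<Rightarrow> real"
  assumes "finite Y" "card Y \<le> k" "finite I" "\<forall>y\<in>Y. \<forall>i\<in>I. \<bar>mu y i\<bar> \<le> 1"
    and rep: "\<And>T. T \<subseteq> I \<Longrightarrow> \<forall>G\<in>cube T. q T G = (\<Sum>y\<in>Y. c y * (\<Prod>i\<in>T. (1 + G i * mu y i) / 2))"
  shows "avgq q I \<le> (real (card I) + 1) ^ k * 2 ^ k * (\<Sum>T\<in>{T. T \<subseteq> I \<and> card T \<le> k}. avgq q T)"
proof -
  define F where "F = {T. T \<subseteq> I \<and> card T \<le> k}"
  define L where "L = (\<Sum>T\<in>F. \<bar>Mc Y c mu T\<bar>)"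
  define K where "K = (real (card I) + 1) ^ k"
  have K0: "K \<ge> 0" unfolding K_def by simp
  have L_le: "L \<le> 2 ^ k * (\<Sum>T\<in>F. avgq q T)"
    unfolding L_def sum_distrib_left
  proof (rule sum_mono)
    fix T assume T: "T \<in> F"
    then have fT: "finite T" using assms(3) finite_subset unfolding F_def by blast
    have "\<bar>Mc Y c mu T\<bar> \<le> 2 ^ card T * avgq q T"
      using T by (intro Mc_le[where q=q and Y=Y and c=c and mu=mu and T=T, OF fT] rep) (auto simp: F_def)
    also have "\<dots> \<le> 2 ^ k * avgq q T"
      using T avgq_nonneg[of q T] by (intro mult_right_mono) (auto simp: F_def)
    finally show "\<bar>Mc Y c mu T\<bar> \<le> 2 ^ k * avgq q T" .
  qed
  have Mc_KL: "\<bar>Mc Y c mu X\<bar> \<le> K * L" if "X \<subseteq> I" for X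
    unfolding K_def L_def F_def
    by (rule core[OF assms(1,2,3) order_refl assms(4) that])
  have pt: "\<bar>q I G\<bar> \<le> K * L" if G: "G \<in> cube I" for G
  proof -
    have "q I G = (1 / 2 ^ card I) * (\<Sum>X\<in>Pow I. Mc Y c mu X * chi X G)"
      by (rule q_expand[OF assms(3) G]) (use rep[OF order_refl] G in auto)
    then have e: "\<bar>q I G\<bar> = (1 / 2 ^ card I) * \<bar>\<Sum>X\<in>Pow I. Mc Y c mu X * chi X G\<bar>"
      by (simp add: abs_mult)
    have "\<bar>\<Sum>X\<in>Pow I. Mc Y c mu X * chi X G\<bar> \<le> (\<Sum>X\<in>Pow I. \<bar>Mc Y c mu X * chi X G\<bar>)"
      by (rule sum_abs)
    also have "\<dots> \<le> (\<Sum>X\<in>Pow I. K * L)"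
    proof (rule sum_mono)
      fix X assume X: "X \<in> Pow I"
      have "\<bar>chi X G\<bar> = 1" using X G by (intro abs_chi') (auto dest: cube_vals)
      then show "\<bar>Mc Y c mu X * chi X G\<bar> \<le> K * L" using Mc_KL X by (simp add: abs_mult)
    qed
    also have "\<dots> = 2 ^ card I * (K * L)" using assms(3) by (simp add: card_Pow)
    finally have "\<bar>\<Sum>X\<in>Pow I. Mc Y c mu X * chi X G\<bar> \<le> 2 ^ card I * (K * L)" .
    then show ?thesis unfolding e by (simp add: field_simps)
  qed
  have "avgq q I \<le> (1 / 2 ^ card I) * (\<Sum>G\<in>cube I. K * L)"
    unfolding avgq_def by (intro mult_left_mono sum_mono pt) auto
  also have "\<dots> = K * L" using assms(3) by (simp add: card_cube)
  also have "\<dots> \<le> K * (2 ^ k * (\<Sum>T\<in>F. avgq q T))"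
    using L_le K0 by (rule mult_left_mono)
  finally show ?thesis unfolding K_def F_def by (simp add: mult.assoc)
qed

lemma exp_rho: "exp (rho t) = exp t + exp (- t)"
  unfolding rho_def by (simp add: add_pos_pos)

definition merge :: "nat set \<Rightarrow> (nat \<Rightarrow> real) \<Rightarrow> (nat \<Rightarrow> real) \<Rightarrow> nat \<Rightarrow> real" where
  "merge I w z = (\<lambda>i. if i \<in> I then z i else w i)"

lemma cube_mem: "x \<in> cube A \<longleftrightarrow> (\<forall>i\<in>A. x i = -1 \<or> x i = 1) \<and> (\<forall>i. i \<notin> A \<longrightarrow> x i = undefined)"
  by (auto simp: cube_def PiE_iff extensional_def)

lemma merge_bij:
  assumes "I \<subseteq> A"
  shows "bij_betw (\<lambda>(w,z). merge I w z) (cube (A-I) \<times> cube I) (cube A)"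
proof -
  have inj: "inj_on (\<lambda>(w,z). merge I w z) (cube (A-I) \<times> cube I)"
  proof (rule inj_onI, clarify)
    fix w z w' z'
    assume w: "w \<in> cube (A-I)" and z: "z \<in> cube I" and w': "w' \<in> cube (A-I)" and z': "z' \<in> cube I"
      and eq: "merge I w z = merge I w' z'"
    have "w i = w' i \<and> z i = z' i" for i
    proof (cases "i \<in> I")
      case True
      then show ?thesis using fun_cong[OF eq, of i] w w' unfolding merge_def cube_mem by auto
    next
      case False
      then show ?thesis using fun_cong[OF eq, of i] z z' unfolding merge_def cube_mem by auto
    qed
    then show "w = w' \<and> z = z'" by auto
  qed
  have img: "(\<lambda>(w,z). merge I w z) ` (cube (A-I) \<times> cube I) = cube A"
  proof
    show "(\<lambda>(w,z). merge I w z) ` (cube (A-I) \<times> cube I) \<subseteq> cube A"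
      using assms by (auto simp: cube_mem merge_def)
    show "cube A \<subseteq> (\<lambda>(w,z). merge I w z) ` (cube (A-I) \<times> cube I)"
    proof
      fix x assume x: "x \<in> cube A"
      have "x = merge I (restrict x (A-I)) (restrict x I)"
        using x assms by (auto simp: merge_def cube_mem restrict_def)
      moreover have "(restrict x (A-I), restrict x I) \<in> cube (A-I) \<times> cube I"
        using x assms by (auto simp: cube_mem restrict_def)
      ultimately show "x \<in> (\<lambda>(w,z). merge I w z) ` (cube (A-I) \<times> cube I)"
        by (metis (no_types, lifting) case_prod_conv image_eqI)
    qed
  qed
  show ?thesis using inj img by (simp add: bij_betw_def)
qed

lemma cube_split:
  assumes "I \<subseteq> A"
  shows "(\<Sum>x\<in>cube A. F x) = (\<Sum>w\<in>cube (A-I). \<Sum>z\<in>cube I. F (merge I w z))"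
proof -
  have "(\<Sum>w\<in>cube (A-I). \<Sum>z\<in>cube I. F (merge I w z)) = (\<Sum>(w,z)\<in>cube (A-I) \<times> cube I. F (merge I w z))"
    by (rule sum.cartesian_product)
  also have "\<dots> = (\<Sum>x\<in>cube A. F x)"
    using sum.reindex_bij_betw[OF merge_bij[OF assms], of F] by (simp add: case_prod_unfold)
  finally show ?thesis by simp
qed

definition qq :: "nat \<Rightarrow> nat \<Rightarrow> (nat \<Rightarrow> nat \<Rightarrow> real) \<Rightarrow> (nat \<Rightarrow> real) \<Rightarrow> (nat \<Rightarrow> real)
    \<Rightarrow> nat \<Rightarrow> nat set \<Rightarrow> real \<Rightarrow> (nat \<Rightarrow> real) \<Rightarrow> nat set \<Rightarrow> (nat \<Rightarrow> real) \<Rightarrow> real" where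
  "qq n m J h g u S r xs T G = rbm_cond n m J h g (\<lambda>x. x u = r \<and> agree T G x) S xs
     - rbm_cond n m J h g (\<lambda>x. x u = r) S xs * rbm_cond n m J h g (agree T G) S xs"

context
  fixes n m :: nat and J :: "nat \<Rightarrow> nat \<Rightarrow> real" and h g :: "nat \<Rightarrow> real" and I L :: "nat set"
  assumes I_sub: "I \<subseteq> {..<n}" and L_sub: "L \<subseteq> {..<m}"
    and L_prop: "\<And>i j. i \<in> I \<Longrightarrow> j < m \<Longrightarrow> j \<notin> L \<Longrightarrow> J i j = 0"
begin

definition tout :: "nat \<Rightarrow> (nat \<Rightarrow> real) \<Rightarrow> real" where
  "tout j x = (\<Sum>i\<in>{..<n}-I. J i j * x i) + g j"

definition Wt :: "(nat \<Rightarrow> real) \<Rightarrow> (nat \<Rightarrow> real) \<Rightarrow> real" where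
  "Wt x y = exp ((\<Sum>j\<in>{..<m}-L. rho (tout j x)) + (\<Sum>i\<in>{..<n}-I. h i * x i) + (\<Sum>j\<in>L. y j * tout j x))"

definition aa :: "nat \<Rightarrow> (nat \<Rightarrow> real) \<Rightarrow> real" where
  "aa i y = h i + (\<Sum>j\<in>L. J i j * y j)"

lemma finI: "finite I" using I_sub finite_subset by blast
lemma finL: "finite L" using L_sub finite_subset by blast

lemma t_split: "(\<Sum>i<n. J i j * x i) + g j = (\<Sum>i\<in>I. J i j * x i) + tout j x"
proof -
  have "(\<Sum>i<n. J i j * x i) = (\<Sum>i\<in>I. J i j * x i) + (\<Sum>i\<in>{..<n}-I. J i j * x i)"
    using I_sub by (metis (no_types, lifting) add.commute finite_lessThan sum.subset_diff)
  then show ?thesis unfolding tout_def by simp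
qed

lemma t_out: "j < m \<Longrightarrow> j \<notin> L \<Longrightarrow> (\<Sum>i<n. J i j * x i) + g j = tout j x"
  unfolding t_split using L_prop by simp

lemma exp_f_expand:
  "exp (rbm_f n m J h g x) = (\<Sum>y\<in>cube L. Wt x y * exp (\<Sum>i\<in>I. x i * aa i y))"
proof -
  define t where "t j = (\<Sum>i<n. J i j * x i) + g j" for j
  define R where "R = (\<Sum>j\<in>{..<m}-L. rho (tout j x)) + (\<Sum>i\<in>{..<n}-I. h i * x i) + (\<Sum>i\<in>I. h i * x i)"
  have f1: "rbm_f n m J h g x = (\<Sum>j\<in>L. rho (t j)) + R"
  proof -
    have "(\<Sum>j<m. rho (t j)) = (\<Sum>j\<in>L. rho (t j)) + (\<Sum>j\<in>{..<m}-L. rho (t j))"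
      using L_sub by (metis (no_types, lifting) add.commute finite_lessThan sum.subset_diff)
    also have "(\<Sum>j\<in>{..<m}-L. rho (t j)) = (\<Sum>j\<in>{..<m}-L. rho (tout j x))"
      unfolding t_def by (intro sum.cong refl) (auto simp: t_out)
    finally have a: "(\<Sum>j<m. rho (t j)) = (\<Sum>j\<in>L. rho (t j)) + (\<Sum>j\<in>{..<m}-L. rho (tout j x))" .
    have b: "(\<Sum>i<n. h i * x i) = (\<Sum>i\<in>I. h i * x i) + (\<Sum>i\<in>{..<n}-I. h i * x i)"
      using I_sub by (metis (no_types, lifting) add.commute finite_lessThan sum.subset_diff)
    show ?thesis unfolding rbm_f_def R_def a[unfolded t_def] b t_def by simp
  qed
  have e1: "exp (\<Sum>j\<in>L. rho (t j)) = (\<Sum>y\<in>cube L. exp (\<Sum>j\<in>L. y j * t j))"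
  proof -
    have "exp (\<Sum>j\<in>L. rho (t j)) = (\<Prod>j\<in>L. exp (rho (t j)))"
      using finL by (simp add: exp_sum)
    also have "\<dots> = (\<Prod>j\<in>L. \<Sum>v\<in>{-1,1::real}. exp (v * t j))"
      by (intro prod.cong refl) (simp add: exp_rho add.commute)
    also have "\<dots> = (\<Sum>y\<in>cube L. \<Prod>j\<in>L. exp (y j * t j))"
      unfolding cube_PiE by (rule prod_sum_PiE) (use finL in auto)
    also have "\<dots> = (\<Sum>y\<in>cube L. exp (\<Sum>j\<in>L. y j * t j))"
      using finL by (simp add: exp_sum)
    finally show ?thesis .
  qed
  have e2: "(\<Sum>j\<in>L. y j * t j) = (\<Sum>j\<in>L. y j * tout j x) + (\<Sum>i\<in>I. x i * (\<Sum>j\<in>L. J i j * y j))" for y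
  proof -
    have "(\<Sum>j\<in>L. y j * t j) = (\<Sum>j\<in>L. y j * tout j x) + (\<Sum>j\<in>L. \<Sum>i\<in>I. y j * (J i j * x i))"
      unfolding t_def t_split by (simp add: algebra_simps sum.distrib sum_distrib_left)
    also have "(\<Sum>j\<in>L. \<Sum>i\<in>I. y j * (J i j * x i)) = (\<Sum>i\<in>I. x i * (\<Sum>j\<in>L. J i j * y j))"
      by (subst sum.swap) (simp add: sum_distrib_left algebra_simps)
    finally show ?thesis .
  qed
  have "exp (rbm_f n m J h g x) = (\<Sum>y\<in>cube L. exp (R + (\<Sum>j\<in>L. y j * t j)))"
    unfolding f1 exp_add e1 by (simp add: sum_distrib_left exp_add mult.commute)
  also have "\<dots> = (\<Sum>y\<in>cube L. Wt x y * exp (\<Sum>i\<in>I. x i * aa i y))"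
  proof (intro sum.cong refl)
    fix y
    have "R + (\<Sum>j\<in>L. y j * t j) = ((\<Sum>j\<in>{..<m}-L. rho (tout j x)) + (\<Sum>i\<in>{..<n}-I. h i * x i) + (\<Sum>j\<in>L. y j * tout j x))
        + (\<Sum>i\<in>I. x i * aa i y)"
      unfolding e2 R_def aa_def by (simp add: algebra_simps sum.distrib)
    then show "exp (R + (\<Sum>j\<in>L. y j * t j)) = Wt x y * exp (\<Sum>i\<in>I. x i * aa i y)"
      unfolding Wt_def by (simp add: exp_add)
  qed
  finally show ?thesis .
qed

definition DD :: "nat \<Rightarrow> (nat \<Rightarrow> real) \<Rightarrow> real" where
  "DD i y = exp (aa i y) + exp (- aa i y)"

definition muu :: "nat \<Rightarrow> (nat \<Rightarrow> real) \<Rightarrow> real" where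
  "muu i y = (exp (aa i y) - exp (- aa i y)) / DD i y"

definition VV :: "((nat \<Rightarrow> real) \<Rightarrow> bool) \<Rightarrow> (nat \<Rightarrow> real) \<Rightarrow> real" where
  "VV E y = (\<Sum>w\<in>{w\<in>cube ({..<n}-I). E w}. Wt w y)"

lemma DD_pos: "DD i y > 0" unfolding DD_def by (simp add: add_pos_pos)

lemma muu_bound: "\<bar>muu i y\<bar> \<le> 1"
proof -
  have p: "0 < exp (aa i y)" "0 < exp (- aa i y)" by simp_all
  have "\<bar>exp (aa i y) - exp (- aa i y)\<bar> \<le> DD i y"
    unfolding DD_def using p by (simp add: abs_le_iff)
  then show ?thesis unfolding muu_def using DD_pos[of i y]
    by (simp add: abs_divide divide_le_eq_1_pos)
qed

lemma aux_pm1: "(D::real) \<noteq> 0 \<Longrightarrow> v = 1 \<Longrightarrow> D * ((1 + v * (X / D)) / 2) = (D + X) / 2"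
  by (simp add: field_simps)

lemma aux_pm2: "(D::real) \<noteq> 0 \<Longrightarrow> v = -1 \<Longrightarrow> D * ((1 + v * (X / D)) / 2) = (D - X) / 2"
  by (simp add: field_simps)

lemma exp_pm: "v = -1 \<or> v = 1 \<Longrightarrow> exp (v * aa i y) = DD i y * ((1 + v * muu i y) / 2)"
proof -
  assume v: "v = -1 \<or> v = 1"
  have D: "DD i y \<noteq> 0" using DD_pos[of i y] by simp
  show ?thesis
  proof (cases "v = 1")
    case True
    have "DD i y * ((1 + v * muu i y) / 2) = (DD i y + (exp (aa i y) - exp (- aa i y))) / 2"
      unfolding muu_def by (rule aux_pm1[OF D True])
    then show ?thesis by (simp add: DD_def True)
  next
    case False
    then have "v = -1" using v by simp
    then have "DD i y * ((1 + v * muu i y) / 2) = (DD i y - (exp (aa i y) - exp (- aa i y))) / 2"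
      unfolding muu_def by (rule aux_pm2[OF D])
    then show ?thesis by (simp add: DD_def \<open>v = -1\<close>)
  qed
qed

lemma sumz:
  assumes "T \<subseteq> I" "G \<in> cube T"
  shows "(\<Sum>z\<in>cube I. if agree T G z then exp (\<Sum>i\<in>I. z i * aa i y) else 0)
    = (\<Prod>i\<in>I. DD i y) * (\<Prod>i\<in>T. (1 + G i * muu i y) / 2)"
proof -
  define B where "B i = (if i \<in> T then {G i} else {-1, 1::real})" for i
  have set_eq: "{z\<in>cube I. agree T G z} = PiE I B"
  proof
    show "{z\<in>cube I. agree T G z} \<subseteq> PiE I B"
      using assms(1) by (auto simp: cube_mem agree_def B_def PiE_iff extensional_def)
    show "PiE I B \<subseteq> {z\<in>cube I. agree T G z}"
    proof
      fix z assume z: "z \<in> PiE I B"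
      have "z i = -1 \<or> z i = 1" if i: "i \<in> I" for i
      proof (cases "i \<in> T")
        case True
        then have "z i = G i" using z i by (auto simp: PiE_iff B_def)
        then show ?thesis using cube_vals[OF assms(2) True] by simp
      next
        case False
        then show ?thesis using z i by (auto simp: PiE_iff B_def)
      qed
      moreover have "z i = undefined" if "i \<notin> I" for i
        using z that by (auto simp: PiE_iff extensional_def)
      moreover have "agree T G z" unfolding agree_def
      proof
        fix i assume i: "i \<in> T"
        then have "i \<in> I" using assms(1) by blast
        then have "z i \<in> B i" using z by (auto simp: PiE_iff)
        then show "z i = G i" using i by (simp add: B_def)
      qed
      ultimately show "z \<in> {z\<in>cube I. agree T G z}" by (simp add: cube_mem)
    qed
  qed
  have "(\<Sum>z\<in>cube I. if agree T G z then exp (\<Sum>i\<in>I. z i * aa i y) else 0)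
      = (\<Sum>z\<in>{z\<in>cube I. agree T G z}. exp (\<Sum>i\<in>I. z i * aa i y))"
    using finI by (simp add: sum.inter_filter finite_cube)
  also have "\<dots> = (\<Sum>z\<in>{z\<in>cube I. agree T G z}. \<Prod>i\<in>I. exp (z i * aa i y))"
    using finI by (simp add: exp_sum)
  also have "\<dots> = (\<Prod>i\<in>I. \<Sum>v\<in>B i. exp (v * aa i y))"
    unfolding set_eq by (rule prod_sum_PiE[symmetric]) (use finI in \<open>auto simp: B_def\<close>)
  also have "\<dots> = (\<Prod>i\<in>I. DD i y * (if i \<in> T then (1 + G i * muu i y) / 2 else 1))"
  proof (intro prod.cong refl)
    fix i assume i: "i \<in> I"
    show "(\<Sum>v\<in>B i. exp (v * aa i y)) = DD i y * (if i \<in> T then (1 + G i * muu i y) / 2 else 1)"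
    proof (cases "i \<in> T")
      case True
      then show ?thesis using exp_pm[of "G i" i y] cube_vals[OF assms(2) True] by (simp add: B_def)
    next
      case False
      then show ?thesis by (simp add: B_def DD_def)
    qed
  qed
  also have "\<dots> = (\<Prod>i\<in>I. DD i y) * (\<Prod>i\<in>I. if i \<in> T then (1 + G i * muu i y) / 2 else 1)"
    by (rule prod.distrib)
  also have "(\<Prod>i\<in>I. if i \<in> T then (1 + G i * muu i y) / 2 else 1) = (\<Prod>i\<in>T. (1 + G i * muu i y) / 2)"
    using finI assms(1) by (simp add: prod.If_cases Int_absorb1)
  finally show ?thesis .
qed

lemma Wt_cong:
  assumes H: "\<forall>i\<in>{..<n}-I. x i = x' i"
  shows "Wt x y = Wt x' y"
proof -
  have "(\<Sum>i\<in>{..<n}-I. J i j * x i) = (\<Sum>i\<in>{..<n}-I. J i j * x' i)" for j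
    by (rule sum.cong) (use H in auto)
  moreover have "(\<Sum>i\<in>{..<n}-I. h i * x i) = (\<Sum>i\<in>{..<n}-I. h i * x' i)"
    by (rule sum.cong) (use H in auto)
  ultimately show ?thesis unfolding Wt_def tout_def by simp
qed

lemma sum_event:
  assumes E: "\<And>x x'. (\<forall>i\<in>{..<n}-I. x i = x' i) \<Longrightarrow> E x = E x'"
    and T: "T \<subseteq> I" "G \<in> cube T"
  shows "(\<Sum>x\<in>{x\<in>cube {..<n}. E x \<and> agree T G x}. exp (rbm_f n m J h g x))
    = (\<Sum>y\<in>cube L. VV E y * ((\<Prod>i\<in>I. DD i y) * (\<Prod>i\<in>T. (1 + G i * muu i y) / 2)))"
proof -
  let ?N = "{..<n}::nat set"
  have m1: "E (merge I w z) = E w" for w z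
    by (rule E) (auto simp: merge_def)
  have m2: "agree T G (merge I w z) = agree T G z" for w z
    using T(1) by (auto simp: merge_def agree_def)
  have m3: "Wt (merge I w z) y = Wt w y" for w z y
    by (rule Wt_cong) (auto simp: merge_def)
  have m4: "(\<Sum>i\<in>I. merge I w z i * aa i y) = (\<Sum>i\<in>I. z i * aa i y)" for w z y
    by (simp add: merge_def)
  have "(\<Sum>x\<in>{x\<in>cube ?N. E x \<and> agree T G x}. exp (rbm_f n m J h g x))
      = (\<Sum>x\<in>cube ?N. if E x \<and> agree T G x then exp (rbm_f n m J h g x) else 0)"
    by (simp add: sum.inter_filter finite_cube)
  also have "\<dots> = (\<Sum>w\<in>cube (?N-I). \<Sum>z\<in>cube I.
      if E (merge I w z) \<and> agree T G (merge I w z) then exp (rbm_f n m J h g (merge I w z)) else 0)"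
    by (rule cube_split[OF I_sub])
  also have "\<dots> = (\<Sum>w\<in>cube (?N-I). \<Sum>z\<in>cube I. \<Sum>y\<in>cube L.
      (if E w then Wt w y else 0) * (if agree T G z then exp (\<Sum>i\<in>I. z i * aa i y) else 0))"
    unfolding m1 m2 exp_f_expand m3 m4
    by (intro sum.cong refl) (auto simp: sum_distrib_left sum_distrib_right)
  also have "\<dots> = (\<Sum>y\<in>cube L. (\<Sum>w\<in>cube (?N-I). if E w then Wt w y else 0) *
      (\<Sum>z\<in>cube I. if agree T G z then exp (\<Sum>i\<in>I. z i * aa i y) else 0))"
  proof -
    have "(\<Sum>w\<in>cube (?N-I). \<Sum>z\<in>cube I. \<Sum>y\<in>cube L.
      (if E w then Wt w y else 0) * (if agree T G z then exp (\<Sum>i\<in>I. z i * aa i y) else 0))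
      = (\<Sum>w\<in>cube (?N-I). \<Sum>y\<in>cube L. \<Sum>z\<in>cube I.
      (if E w then Wt w y else 0) * (if agree T G z then exp (\<Sum>i\<in>I. z i * aa i y) else 0))"
      by (rule sum.cong[OF refl]) (rule sum.swap)
    also have "\<dots> = (\<Sum>y\<in>cube L. \<Sum>w\<in>cube (?N-I). \<Sum>z\<in>cube I.
      (if E w then Wt w y else 0) * (if agree T G z then exp (\<Sum>i\<in>I. z i * aa i y) else 0))"
      by (rule sum.swap)
    finally show ?thesis by (simp only: sum_product)
  qed
  also have "\<dots> = (\<Sum>y\<in>cube L. VV E y * ((\<Prod>i\<in>I. DD i y) * (\<Prod>i\<in>T. (1 + G i * muu i y) / 2)))"
    unfolding sumz[OF T] VV_def by (simp add: sum.inter_filter finite_cube)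
  finally show ?thesis .
qed

lemma prob_event:
  assumes E: "\<And>x x'. (\<forall>i\<in>{..<n}-I. x i = x' i) \<Longrightarrow> E x = E x'"
    and T: "T \<subseteq> I" "G \<in> cube T"
  shows "rbm_prob n m J h g (\<lambda>x. E x \<and> agree T G x)
    = (\<Sum>y\<in>cube L. (VV E y * (\<Prod>i\<in>I. DD i y) / (\<Sum>x\<in>cube {..<n}. exp (rbm_f n m J h g x)))
        * (\<Prod>i\<in>T. (1 + G i * muu i y) / 2))"
proof -
  have "rbm_prob n m J h g (\<lambda>x. E x \<and> agree T G x) = (\<Sum>x\<in>{x\<in>cube {..<n}. E x \<and> agree T G x}. exp (rbm_f n m J h g x))
      / (\<Sum>x\<in>cube {..<n}. exp (rbm_f n m J h g x))"
    unfolding rbm_prob_def atLeast0LessThan ..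
  also have "\<dots> = (\<Sum>y\<in>cube L. VV E y * ((\<Prod>i\<in>I. DD i y) * (\<Prod>i\<in>T. (1 + G i * muu i y) / 2)))
      / (\<Sum>x\<in>cube {..<n}. exp (rbm_f n m J h g x))"
    using sum_event[OF E T] by simp
  also have "\<dots> = (\<Sum>y\<in>cube L. (VV E y * (\<Prod>i\<in>I. DD i y) / (\<Sum>x\<in>cube {..<n}. exp (rbm_f n m J h g x)))
        * (\<Prod>i\<in>T. (1 + G i * muu i y) / 2))"
    unfolding sum_divide_distrib by (intro sum.cong refl) (simp add: field_simps)
  finally show ?thesis .
qed

lemma rep_q:
  assumes u: "u \<notin> I" "u < n" and S: "S \<subseteq> {..<n}" "S \<inter> I = {}"
  shows "\<exists>c. \<forall>T. T \<subseteq> I \<longrightarrow> (\<forall>G\<in>cube T. qq n m J h g u S r xs T G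
      = (\<Sum>y\<in>cube L. c y * (\<Prod>i\<in>T. (1 + G i * muu i y) / 2)))"
proof -
  define E1 where "E1 = (\<lambda>x::nat\<Rightarrow>real. x u = r \<and> agree S xs x)"
  define E2 where "E2 = agree S xs"
  define Z where "Z = (\<Sum>x\<in>cube {..<n}. exp (rbm_f n m J h g x))"
  define PS where "PS = rbm_prob n m J h g (agree S xs)"
  define al where "al = rbm_cond n m J h g (\<lambda>x. x u = r) S xs"
  define c where "c y = (VV E1 y * (\<Prod>i\<in>I. DD i y) / Z - al * (VV E2 y * (\<Prod>i\<in>I. DD i y) / Z)) / PS" for y
  have resp1: "E1 x = E1 x'" if "\<forall>i\<in>{..<n}-I. x i = x' i" for x x'
  proof -
    have "x u = x' u" using that u by auto
    moreover have "agree S xs x = agree S xs x'"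
    proof -
      have h: "\<And>i. i \<in> S \<Longrightarrow> x i = x' i" using that S by blast
      show ?thesis unfolding agree_def using h by auto
    qed
    ultimately show ?thesis unfolding E1_def by simp
  qed
  have resp2: "E2 x = E2 x'" if "\<forall>i\<in>{..<n}-I. x i = x' i" for x x'
  proof -
    have h: "\<And>i. i \<in> S \<Longrightarrow> x i = x' i" using that S by blast
    show ?thesis unfolding E2_def agree_def using h by auto
  qed
  have eq1: "(\<lambda>x. (x u = r \<and> agree T G x) \<and> agree S xs x) = (\<lambda>x. E1 x \<and> agree T G x)" for T G
    by (auto simp: E1_def)
  have eq2: "(\<lambda>x. agree T G x \<and> agree S xs x) = (\<lambda>x. E2 x \<and> agree T G x)" for T G
    by (auto simp: E2_def)
  show ?thesis
  proof (rule exI[of _ c], intro allI impI ballI)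
    fix T G assume T: "T \<subseteq> I" and G: "G \<in> cube T"
    define P where "P y = (\<Prod>i\<in>T. (1 + G i * muu i y) / 2)" for y
    have "qq n m J h g u S r xs T G = rbm_cond n m J h g (\<lambda>x. x u = r \<and> agree T G x) S xs
        - al * rbm_cond n m J h g (agree T G) S xs"
      by (simp add: qq_def al_def)
    also have "\<dots> = rbm_prob n m J h g (\<lambda>x. E1 x \<and> agree T G x) / PS
        - al * (rbm_prob n m J h g (\<lambda>x. E2 x \<and> agree T G x) / PS)"
      unfolding rbm_cond_def eq1 eq2 PS_def ..
    also have "\<dots> = (\<Sum>y\<in>cube L. (VV E1 y * (\<Prod>i\<in>I. DD i y) / Z) * P y) / PS
        - al * ((\<Sum>y\<in>cube L. (VV E2 y * (\<Prod>i\<in>I. DD i y) / Z) * P y) / PS)"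
      using prob_event[OF resp1 T G] prob_event[OF resp2 T G] by (simp only: Z_def P_def)
    also have "\<dots> = ((\<Sum>y\<in>cube L. (VV E1 y * (\<Prod>i\<in>I. DD i y) / Z) * P y)
        - al * (\<Sum>y\<in>cube L. (VV E2 y * (\<Prod>i\<in>I. DD i y) / Z) * P y)) / PS"
      by (simp add: diff_divide_distrib)
    also have "(\<Sum>y\<in>cube L. (VV E1 y * (\<Prod>i\<in>I. DD i y) / Z) * P y)
        - al * (\<Sum>y\<in>cube L. (VV E2 y * (\<Prod>i\<in>I. DD i y) / Z) * P y)
        = (\<Sum>y\<in>cube L. (VV E1 y * (\<Prod>i\<in>I. DD i y) / Z - al * (VV E2 y * (\<Prod>i\<in>I. DD i y) / Z)) * P y)"
      by (simp add: sum_distrib_left sum_subtractf left_diff_distrib mult.assoc)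
    also have "(\<Sum>y\<in>cube L. (VV E1 y * (\<Prod>i\<in>I. DD i y) / Z - al * (VV E2 y * (\<Prod>i\<in>I. DD i y) / Z)) * P y) / PS
        = (\<Sum>y\<in>cube L. c y * P y)"
      unfolding sum_divide_distrib c_def by (intro sum.cong refl) simp
    finally show "qq n m J h g u S r xs T G = (\<Sum>y\<in>cube L. c y * (\<Prod>i\<in>T. (1 + G i * muu i y) / 2))"
      unfolding P_def .
  qed
qed

lemma rep_all:
  assumes u: "u \<notin> I" "u < n" and S: "S \<subseteq> {..<n}" "S \<inter> I = {}"
  shows "\<exists>mu::(nat\<Rightarrow>real)\<Rightarrow>nat\<Rightarrow>real. (\<forall>y i. \<bar>mu y i\<bar> \<le> 1) \<and> (\<forall>r xs. \<exists>c. \<forall>T. T \<subseteq> I \<longrightarrow>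
     (\<forall>G\<in>cube T. qq n m J h g u S r xs T G = (\<Sum>y\<in>cube L. c y * (\<Prod>i\<in>T. (1 + G i * mu y i) / 2))))"
  by (rule exI[of _ "\<lambda>y i. muu i y"]) (use rep_q[OF assms] muu_bound in auto)

end

lemma rbm_prob_nonneg: "rbm_prob n m J h g E \<ge> 0"
  unfolding rbm_prob_def by (intro divide_nonneg_nonneg sum_nonneg) auto

lemma nu_alt: "rbm_nu n m J h g u T S = (\<Sum>r\<in>{-1,1::real}. \<Sum>xs\<in>cube S.
   (1/2) * rbm_prob n m J h g (agree S xs) * avgq (qq n m J h g u S r xs) T)"
  unfolding rbm_nu_def avgq_def qq_def
  apply (rule sum.cong[OF refl])
  apply (subst sum.swap)
  apply (simp add: sum_distrib_left mult.assoc)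
  done

lemma nu_nonneg: "rbm_nu n m J h g u T S \<ge> 0"
  unfolding nu_alt
  by (intro sum_nonneg mult_nonneg_nonneg rbm_prob_nonneg avgq_nonneg) auto

lemma card_fam:
  assumes "finite I" "k + 1 \<le> card I"
  shows "card {T. T \<subseteq> I \<and> card T \<le> k} \<le> card I ^ (k + 1)"
proof -
  let ?N = "card I"
  have "{T. T \<subseteq> I \<and> card T \<le> k} = (\<Union>j\<in>{..k}. {T. T \<subseteq> I \<and> card T = j})" by auto
  then have "card {T. T \<subseteq> I \<and> card T \<le> k} \<le> (\<Sum>j\<in>{..k}. card {T. T \<subseteq> I \<and> card T = j})"
    by (simp add: card_UN_le)
  also have "\<dots> = (\<Sum>j\<in>{..k}. ?N choose j)" using n_subsets[OF assms(1)] by simp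
  also have "\<dots> \<le> (\<Sum>j\<in>{..k}. ?N ^ k)"
  proof (rule sum_mono)
    fix j assume j: "j \<in> {..k}"
    have "?N choose j \<le> ?N ^ j" using j assms(2) by (intro binomial_le_pow) auto
    also have "\<dots> \<le> ?N ^ k" using j assms(2) by (intro power_increasing) auto
    finally show "?N choose j \<le> ?N ^ k" .
  qed
  also have "\<dots> = (k + 1) * ?N ^ k" by simp
  also have "\<dots> \<le> ?N * ?N ^ k" using assms(2) by (intro mult_right_mono) auto
  finally show ?thesis by simp
qed

theorem lemma4:
  fixes n m :: nat and J :: "nat \<Rightarrow> nat \<Rightarrow> real" and h g :: "nat \<Rightarrow> real"
    and u :: nat and I S :: "nat set"
  assumes "u < n" and "I \<subseteq> {0..<n}" and "S \<subseteq> {0..<n}"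
    and "u \<notin> I" and "u \<notin> S" and "I \<inter> S = {}"
    and "I \<noteq> {}"
    and "I \<subseteq> mrf_nbhd n m J h g u"
  shows "\<exists>I' \<subseteq> I. card I' \<le> 2 ^ rbm_s n m J h g \<and>
    rbm_nu n m J h g u I' S \<ge>
      (1 / (4 * real (card I)) ^ (2 ^ rbm_s n m J h g)) *
      (1 / real (card I)) ^ (2 ^ rbm_s n m J h g * (2 ^ rbm_s n m J h g + 1)) *
      rbm_nu n m J h g u I S"
proof -
  define s where "s = rbm_s n m J h g"
  define k where "k = (2::nat) ^ s"
  define N where "N = card I"
  define nu where "nu T = rbm_nu n m J h g u T S" for T
  have finI: "finite I" using assms(2) finite_subset by blast
  have N1: "N \<ge> 1" using finI assms(7) unfolding N_def by (simp add: Suc_le_eq card_gt_0_iff)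
  have k1: "k \<ge> 1" unfolding k_def by simp
  define cc where "cc = (1 / (4 * real N) ^ k) * (1 / real N) ^ (k * (k + 1))"
  define C' where "C' = (4 * real N) ^ k * real N ^ (k * (k + 1))"
  have C'pos: "C' > 0" unfolding C'_def using N1 by simp
  have cc_eq: "cc = 1 / C'" unfolding cc_def C'_def by (simp add: power_one_over)
  have C'1: "C' \<ge> 1"
  proof -
    have a1: "1 \<le> (4 * real N) ^ k" using N1 by (intro one_le_power) auto
    have a2: "1 \<le> real N ^ (k * (k + 1))" using N1 by (intro one_le_power) auto
    have "1 * 1 \<le> (4 * real N) ^ k * real N ^ (k * (k + 1))"
      using a1 a2 by (intro mult_mono) auto
    then show ?thesis unfolding C'_def by simp
  qed
  have cc_le1: "cc \<le> 1" using C'1 unfolding cc_eq by simp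
  have cc0: "cc \<ge> 0" using C'pos unfolding cc_eq by simp
  have main: "\<exists>I' \<subseteq> I. card I' \<le> k \<and> nu I' \<ge> cc * nu I"
  proof (cases "N \<le> k")
    case True
    have "cc * nu I \<le> nu I" using nu_nonneg cc_le1 cc0 unfolding nu_def
      by (intro mult_left_le_one_le) auto
    then show ?thesis using True unfolding N_def by blast
  next
    case False
    define L where "L = {j\<in>{..<m}. \<exists>i\<in>I. J i j \<noteq> 0}"
    have I_sub: "I \<subseteq> {..<n}" using assms(2) by auto
    have S_sub: "S \<subseteq> {..<n}" using assms(3) by auto
    have SI: "S \<inter> I = {}" using assms(6) by auto
    have L_sub: "L \<subseteq> {..<m}" by (auto simp: L_def)
    have L_prop: "\<And>i j. i \<in> I \<Longrightarrow> j < m \<Longrightarrow> j \<notin> L \<Longrightarrow> J i j = 0" by (auto simp: L_def)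
    have finL: "finite L" using L_sub finite_subset by blast
    define Lu where "Lu = {j \<in> {0..<m}. \<exists>i \<in> mrf_nbhd n m J h g u. J i j \<noteq> 0}"
    have "L \<subseteq> Lu" using assms(8) unfolding L_def Lu_def by auto
    then have "card L \<le> card Lu" by (intro card_mono) (auto simp: Lu_def)
    also have "card Lu \<le> s" unfolding s_def rbm_s_def Lu_def
      by (rule Max_ge) (use assms(1) in auto)
    finally have cardL: "card L \<le> s" .
    have cardY: "card (cube L) \<le> k" unfolding k_def card_cube[OF finL]
      using cardL by (intro power_increasing) auto
    obtain mu :: "(nat\<Rightarrow>real)\<Rightarrow>nat\<Rightarrow>real" where mu1: "\<forall>y i. \<bar>mu y i\<bar> \<le> 1" and
      rep: "\<forall>r xs. \<exists>c. \<forall>T. T \<subseteq> I \<longrightarrow>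
     (\<forall>G\<in>cube T. qq n m J h g u S r xs T G = (\<Sum>y\<in>cube L. c y * (\<Prod>i\<in>T. (1 + G i * mu y i) / 2)))"
      using rep_all[where n=n and m=m and J=J and h=h and g=g and I=I and L=L, OF I_sub L_sub L_prop assms(4) assms(1) S_sub SI] by blast
    define F where "F = {T. T \<subseteq> I \<and> card T \<le> k}"
    define K2 where "K2 = (real N + 1) ^ k * 2 ^ k"
    have K20: "K2 \<ge> 0" unfolding K2_def by simp
    have qb: "avgq (qq n m J h g u S r xs) I \<le> K2 * (\<Sum>T\<in>F. avgq (qq n m J h g u S r xs) T)" for r xs
    proof -
      obtain c where c: "\<forall>T. T \<subseteq> I \<longrightarrow>
     (\<forall>G\<in>cube T. qq n m J h g u S r xs T G = (\<Sum>y\<in>cube L. c y * (\<Prod>i\<in>T. (1 + G i * mu y i) / 2)))"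
        using rep by blast
      show ?thesis unfolding K2_def F_def N_def
        by (rule qlevel[OF finite_cube[OF finL] cardY finI]) (use mu1 c in auto)
    qed
    define w where "w xs = (1/2) * rbm_prob n m J h g (agree S xs)" for xs
    have w0: "w xs \<ge> 0" for xs unfolding w_def using rbm_prob_nonneg by simp
    have nu_eq: "nu T = (\<Sum>r\<in>{-1,1::real}. \<Sum>xs\<in>cube S. w xs * avgq (qq n m J h g u S r xs) T)" for T
      unfolding nu_def nu_alt w_def by simp
    have "nu I \<le> (\<Sum>r\<in>{-1,1::real}. \<Sum>xs\<in>cube S. w xs * (K2 * (\<Sum>T\<in>F. avgq (qq n m J h g u S r xs) T)))"
      unfolding nu_eq by (intro sum_mono mult_left_mono qb w0)
    also have "\<dots> = K2 * (\<Sum>r\<in>{-1,1::real}. \<Sum>xs\<in>cube S. \<Sum>T\<in>F. w xs * avgq (qq n m J h g u S r xs) T)"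
      by (simp add: sum_distrib_left mult_ac distrib_left)
    also have "(\<Sum>r\<in>{-1,1::real}. \<Sum>xs\<in>cube S. \<Sum>T\<in>F. w xs * avgq (qq n m J h g u S r xs) T)
        = (\<Sum>T\<in>F. nu T)"
    proof -
      have "(\<Sum>r\<in>{-1,1::real}. \<Sum>xs\<in>cube S. \<Sum>T\<in>F. w xs * avgq (qq n m J h g u S r xs) T)
         = (\<Sum>r\<in>{-1,1::real}. \<Sum>T\<in>F. \<Sum>xs\<in>cube S. w xs * avgq (qq n m J h g u S r xs) T)"
        by (rule sum.cong[OF refl]) (rule sum.swap)
      also have "\<dots> = (\<Sum>T\<in>F. \<Sum>r\<in>{-1,1::real}. \<Sum>xs\<in>cube S. w xs * avgq (qq n m J h g u S r xs) T)"
        by (rule sum.swap)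
      finally show ?thesis unfolding nu_eq .
    qed
    finally have nuI: "nu I \<le> K2 * (\<Sum>T\<in>F. nu T)" .
    have finF: "finite F" unfolding F_def by (rule fin_fam[OF finI])
    have FnE: "{} \<in> F" unfolding F_def by simp
    define M where "M = Max (nu ` F)"
    have "M \<in> nu ` F" unfolding M_def using finF FnE by (intro Max_in) auto
    then obtain Ts where Ts: "Ts \<in> F" "nu Ts = M" by auto
    have Mge: "nu T \<le> M" if "T \<in> F" for T unfolding M_def using finF that by (intro Max_ge) auto
    have M0: "M \<ge> 0" using Ts nu_nonneg unfolding nu_def by metis
    have "(\<Sum>T\<in>F. nu T) \<le> real (card F) * M" using sum_bounded_above[of F nu M] Mge by simp
    also have "real (card F) \<le> real N ^ (k + 1)"
    proof -
      have "card F \<le> N ^ (k + 1)" unfolding F_def N_def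
        by (rule card_fam[OF finI]) (use False N_def in simp)
      then show ?thesis by (metis of_nat_le_iff of_nat_power)
    qed
    then have "real (card F) * M \<le> real N ^ (k + 1) * M" using M0 by (rule mult_right_mono)
    finally have sumF: "(\<Sum>T\<in>F. nu T) \<le> real N ^ (k + 1) * M" .
    have "K2 * real N ^ (k + 1) \<le> C'"
    proof -
      have "K2 = (2 * (real N + 1)) ^ k" unfolding K2_def by (simp only: power_mult_distrib mult.commute)
      also have "\<dots> \<le> (4 * real N) ^ k" using N1 by (intro power_mono) auto
      finally have a: "K2 \<le> (4 * real N) ^ k" .
      have b: "real N ^ (k + 1) \<le> real N ^ (k * (k + 1))"
        using N1 k1 by (intro power_increasing) auto
      show ?thesis unfolding C'_def using a b K20 by (intro mult_mono) auto
    qed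
    have "nu I \<le> K2 * (real N ^ (k + 1) * M)" using nuI sumF K20 by (meson order_trans mult_left_mono)
    also have "\<dots> = (K2 * real N ^ (k + 1)) * M" by simp
    also have "\<dots> \<le> C' * M" using \<open>K2 * real N ^ (k + 1) \<le> C'\<close> M0 by (rule mult_right_mono)
    finally have "nu I \<le> C' * M" .
    then have "cc * nu I \<le> M" unfolding cc_eq using C'pos by (simp add: field_simps)
    moreover have "Ts \<subseteq> I" "card Ts \<le> k" using Ts(1) unfolding F_def by auto
    ultimately show ?thesis using Ts(2) by blast
  qed
  then show ?thesis unfolding cc_def nu_def k_def s_def N_def by simp
qed

end
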